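(* Consider the sub-$\ell^\infty$ structure on $\mathbb{R}^3$ defined by $X_1=\partial_x-\tfrac{y}{2}\partial_z$, $X_2=\partial_y+\tfrac{x}{2}\partial_z$. (a) Let $(\lambda,\gamma)$ be an extremal pair on $[0,T]$ with $\gamma$ nonconstant and control $u$, and suppose that for some $j\in\{1,2\}$ the restriction to some open interval $I$ is a $\varphi_j$-singular arc. Then $\varphi_j\equiv0$ on all of $[0,T]$ and $u_{3-j}$ is a.e. constantly equal to $1$ or constantly equal to $-1$ on $[0,T]$. (b) Conversely, every admissible trajectory for which, for some $i\in\{1,2\}$, $u_i$ is a.e. constantly equal to $1$ or a.e. constantly equal to $-1$, admits an extremal lift for which $\varphi_{3-i}\equiv0$ on the whole domain. (c) Every such admissible trajectory (with $u_i\equiv1$ or $u_i\equiv-1$ for some $i$) is a time-minimizer.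
   Context: Sub-$\ell^\infty$ structure defined by smooth vector fields $X_1,\dots,X_k$ on a manifold $M$: an admissible trajectory is an absolutely continuous curve $\gamma:[0,T]\to M$ together with a measurable control $u=(u_1,\dots,u_k):[0,T]\to\mathbb{R}^k$ with $|u_i(t)|\le1$ for all $i$ and a.e. $t$, such that $\dot\gamma(t)=\sum_i u_i(t)X_i(\gamma(t))$ for a.e. $t$. It is a time-minimizer (optimal) if no admissible trajectory joins $\gamma(0)$ to $\gamma(T)$ in time less than $T$. An extremal pair is a pair $(\lambda,\gamma)$ where $\gamma$ is admissible with control $u$ and $\lambda:[0,T]\to T^*M$ is absolutely continuous with $\lambda(t)\in T^*_{\gamma(t)}M\setminus\{0\}$, such that, with $\mathcal H(\lambda,p,u)=\sum_i u_i\langle\lambda,X_i(p)\rangle$, in canonical coordinates $\dot\lambda=-\partial_p\mathcal H(\lambda,\gamma,u)$, $\dot\gamma=\partial_\lambda\mathcal H(\lambda,\gamma,u)$ a.e., and there is a constant $\lambda_0\ge0$ with $\sum_iu_i(t)\langle\lambda(t),X_i(\gamma(t))\rangle=\sum_i|\langle\lambda(t),X_i(\gamma(t))\rangle|=\lambda_0$ for a.e. $t$; $\gamma$ is then an extremal trajectory and $\lambda$ an extremal lift. The switching functions are $\varphi_j(t)=\langle\lambda(t),X_j(\gamma(t))\rangle$. The restriction of an extremal pair to an open interval $I$ is a $\varphi_j$-singular arc if $\varphi_j\equiv0$ on $I$. *)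

theory Defs
  imports "HOL-Analysis.Analysis"
begin

type_synonym pt = "real \<times> real \<times> real"

definition abs_cont_on :: "real set \<Rightarrow> (real \<Rightarrow> 'a::real_normed_vector) \<Rightarrow> bool" where
  "abs_cont_on S f \<longleftrightarrow>
     (\<forall>\<epsilon>>0. \<exists>\<delta>>0. \<forall>(n::nat) (a::nat \<Rightarrow> real) b.
        (\<forall>k<n. a k \<le> b k \<and> {a k..b k} \<subseteq> S) \<and>
        (\<forall>k<n. \<forall>l<n. k \<noteq> l \<longrightarrow> b k \<le> a l \<or> b l \<le> a k) \<and>
        (\<Sum>k<n. b k - a k) < \<delta>
        \<longrightarrow> (\<Sum>k<n. norm (f (b k) - f (a k))) < \<epsilon>)"

definition X :: "nat \<Rightarrow> pt \<Rightarrow> pt" where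
  "X i p = (case p of (x, y, z) \<Rightarrow>
      (if i = 1 then (1, 0, - y / 2) else if i = 2 then (0, 1, x / 2) else (0, 0, 0)))"

definition admissible :: "real \<Rightarrow> (real \<Rightarrow> pt) \<Rightarrow> (nat \<Rightarrow> real \<Rightarrow> real) \<Rightarrow> bool" where
  "admissible T \<gamma> u \<longleftrightarrow> 0 \<le> T \<and> abs_cont_on {0..T} \<gamma> \<and>
     (\<forall>i\<in>{1,2}. u i \<in> borel_measurable (lebesgue_on {0..T})) \<and>
     (AE t in lebesgue. t \<in> {0..T} \<longrightarrow>
        (\<forall>i\<in>{1,2}. \<bar>u i t\<bar> \<le> 1) \<and>
        (\<gamma> has_vector_derivative (\<Sum>i\<in>{1,2}. u i t *\<^sub>R X i (\<gamma> t))) (at t))"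

definition time_minimizer :: "real \<Rightarrow> (real \<Rightarrow> pt) \<Rightarrow> bool" where
  "time_minimizer T \<gamma> \<longleftrightarrow>
     (\<forall>T' \<gamma>' u'. admissible T' \<gamma>' u' \<and> \<gamma>' 0 = \<gamma> 0 \<and> \<gamma>' T' = \<gamma> T \<longrightarrow> T \<le> T')"

text \<open>Switching function phi_j(t) = <lambda(t), X_j(gamma(t))>; covectors on R^3 are
  identified with R^3 via canonical coordinates and the pairing is the inner product.\<close>
definition phi :: "(real \<Rightarrow> pt) \<Rightarrow> (real \<Rightarrow> pt) \<Rightarrow> nat \<Rightarrow> real \<Rightarrow> real" where
  "phi lam \<gamma> j t = inner (lam t) (X j (\<gamma> t))"

text \<open>Adjoint equation  d lambda/dt = - d_p H(lambda, gamma, u), where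
  H(lambda,p,u) = sum_i u_i <lambda, X_i p>, written via the Frechet derivative of X_i;
  the equation d gamma/dt = d_lambda H is part of admissibility.\<close>
definition extremal_pair :: "real \<Rightarrow> (real \<Rightarrow> pt) \<Rightarrow> (real \<Rightarrow> pt) \<Rightarrow> (nat \<Rightarrow> real \<Rightarrow> real) \<Rightarrow> bool" where
  "extremal_pair T lam \<gamma> u \<longleftrightarrow> admissible T \<gamma> u \<and> abs_cont_on {0..T} lam \<and>
     (\<forall>t\<in>{0..T}. lam t \<noteq> 0) \<and>
     (AE t in lebesgue. t \<in> {0..T} \<longrightarrow>
        (\<exists>\<mu>. (lam has_vector_derivative \<mu>) (at t) \<and>
             (\<forall>v. inner \<mu> v = - (\<Sum>i\<in>{1,2}. u i t * inner (lam t) (frechet_derivative (X i) (at (\<gamma> t)) v))))) \<and>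
     (\<exists>lam0\<ge>0. AE t in lebesgue. t \<in> {0..T} \<longrightarrow>
        (\<Sum>i\<in>{1,2}. u i t * phi lam \<gamma> i t) = lam0 \<and> (\<Sum>i\<in>{1,2}. \<bar>phi lam \<gamma> i t\<bar>) = lam0)"

end

theory Submission
  imports Defs
begin


lemma null_open_cover:
  assumes "(0::real) < e" "N \<in> null_sets lebesgue"
  obtains G where "open G" "N \<subseteq> G" "G \<in> lmeasurable" "measure lebesgue G < e"
proof -
  have Ns: "N \<in> sets lebesgue" using assms(2) by auto
  obtain T where T: "open T" "N \<subseteq> T" "(T - N) \<in> lmeasurable" "emeasure lebesgue (T - N) < ennreal e"
    using sets_lebesgue_outer_open[OF Ns assms(1)] by blast
  have Nf: "N \<in> lmeasurable" using assms(2) by (simp add: fmeasurableI_null_sets)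
  have TU: "T = (T - N) \<union> N" using T by blast
  have Tf: "T \<in> lmeasurable" using T(3) Nf by (metis TU fmeasurable.Un)
  have m0: "measure lebesgue N = 0" using assms(2) by (simp add: measure_eq_0_null_sets)
  have "measure lebesgue (T - N) < e"
    using T(4) T(3) by (metis emeasure_eq_measure2 ennreal_less_iff measure_nonneg)
  moreover have "measure lebesgue T \<le> measure lebesgue (T - N) + measure lebesgue N"
    by (metis TU T(3) Nf fmeasurableD measure_Un_le)
  ultimately show ?thesis using that T Tf m0 by auto
qed

lemma ac_delta:
  assumes "abs_cont_on S f" "e > 0"
  obtains \<delta> where "\<delta> > 0" "\<And>(n::nat) aa bb. (\<forall>k<n. aa k \<le> bb k \<and> {aa k..bb k} \<subseteq> S) \<Longrightarrow>
        (\<forall>k<n. \<forall>l<n. k \<noteq> l \<longrightarrow> bb k \<le> aa l \<or> bb l \<le> aa k) \<Longrightarrow> (\<Sum>k<n. bb k - aa k) < \<delta>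
        \<Longrightarrow> (\<Sum>k<n. norm (f (bb k) - f (aa k))) < e"
proof -
  have "\<exists>\<delta>>0. \<forall>(n::nat) (aa::nat \<Rightarrow> real) bb. (\<forall>k<n. aa k \<le> bb k \<and> {aa k..bb k} \<subseteq> S) \<and>
        (\<forall>k<n. \<forall>l<n. k \<noteq> l \<longrightarrow> bb k \<le> aa l \<or> bb l \<le> aa k) \<and> (\<Sum>k<n. bb k - aa k) < \<delta>
        \<longrightarrow> (\<Sum>k<n. norm (f (bb k) - f (aa k))) < e"
    using assms unfolding abs_cont_on_def by (elim allE[of _ e]) (erule impE)
  then obtain \<delta> where d: "\<delta> > 0" and H: "\<forall>(n::nat) (aa::nat \<Rightarrow> real) bb. (\<forall>k<n. aa k \<le> bb k \<and> {aa k..bb k} \<subseteq> S) \<and>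
        (\<forall>k<n. \<forall>l<n. k \<noteq> l \<longrightarrow> bb k \<le> aa l \<or> bb l \<le> aa k) \<and> (\<Sum>k<n. bb k - aa k) < \<delta>
        \<longrightarrow> (\<Sum>k<n. norm (f (bb k) - f (aa k))) < e" by (elim exE conjE)
  show ?thesis
  proof (rule that[OF d])
    fix n :: nat and aa bb assume A: "\<forall>k<n. aa k \<le> bb k \<and> {aa k..bb k} \<subseteq> S"
      and B: "\<forall>k<n. \<forall>l<n. k \<noteq> l \<longrightarrow> bb k \<le> aa l \<or> bb l \<le> aa k" and C: "(\<Sum>k<n. bb k - aa k) < \<delta>"
    show "(\<Sum>k<n. norm (f (bb k) - f (aa k))) < e"
      using H[rule_format, OF conjI[OF A conjI[OF B C]]] .
  qed
qed


lemma ac_bound: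
  fixes f :: "real \<Rightarrow> real"
  assumes ab: "a \<le> b" and ac: "abs_cont_on {a..b} f" and B: "0 \<le> B"
    and der: "AE t in lebesgue. t \<in> {a<..<b} \<longrightarrow> (\<exists>D. (f has_real_derivative D) (at t) \<and> \<bar>D\<bar> \<le> B)"
  shows "\<bar>f b - f a\<bar> \<le> B * (b - a)"
proof -
  have main: "\<bar>f b - f a\<bar> \<le> (B + e) * (b - a) + e" if e: "e > 0" for e
  proof -
    obtain \<delta> where \<delta>: "\<delta> > 0" and ac\<delta>: "\<And>(n::nat) aa bb. (\<forall>k<n. aa k \<le> bb k \<and> {aa k..bb k} \<subseteq> {a..b}) \<Longrightarrow>
        (\<forall>k<n. \<forall>l<n. k \<noteq> l \<longrightarrow> bb k \<le> aa l \<or> bb l \<le> aa k) \<Longrightarrow> (\<Sum>k<n. bb k - aa k) < \<delta>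
        \<Longrightarrow> (\<Sum>k<n. norm (f (bb k) - f (aa k))) < e"
      using ac_delta[OF ac e] by blast
    obtain N0 where N0: "{x \<in> space lebesgue. \<not> (x \<in> {a<..<b} \<longrightarrow> (\<exists>D. (f has_real_derivative D) (at x) \<and> \<bar>D\<bar> \<le> B))} \<subseteq> N0"
       "emeasure lebesgue N0 = 0" "N0 \<in> sets lebesgue"
      using der by (rule AE_E)
    define N where "N = N0 \<union> {a,b}"
    have "N0 \<in> null_sets lebesgue" using N0 by auto
    then have "negligible N0" by (simp add: negligible_iff_null_sets)
    then have "negligible N" unfolding N_def by (simp add: negligible_Un)
    then have Nnull: "N \<in> null_sets lebesgue" by (simp add: negligible_iff_null_sets)
    obtain G where G: "open G" "N \<subseteq> G" "G \<in> lmeasurable" "measure lebesgue G < \<delta>"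
      using null_open_cover[OF \<delta> Nnull] by blast
    have good: "\<exists>r>0. \<forall>s. \<bar>s - t\<bar> < r \<longrightarrow> \<bar>f s - f t\<bar> \<le> (B + e) * \<bar>s - t\<bar>" if t: "t \<in> {a..b} - N" for t
    proof -
      from t have "t \<in> {a<..<b}" "t \<notin> N0" by (auto simp: N_def)
      then obtain D where D: "(f has_real_derivative D) (at t)" "\<bar>D\<bar> \<le> B" using N0(1) by auto
      then have "(f has_derivative (\<lambda>x. D * x)) (at t within UNIV)"
        by (simp add: has_field_derivative_def)
      then obtain r where r: "r > 0" "\<forall>s\<in>UNIV. norm (s - t) < r \<longrightarrow> norm (f s - f t - D * (s - t)) \<le> e * norm (s - t)"
        using e unfolding has_derivative_within_alt by blast
      show ?thesis
      proof (intro exI conjI allI impI)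
        show "r > 0" by fact
        fix s assume s: "\<bar>s - t\<bar> < r"
        have "\<bar>f s - f t - D * (s - t)\<bar> \<le> e * \<bar>s - t\<bar>" using r s by auto
        moreover have "\<bar>D * (s - t)\<bar> \<le> B * \<bar>s - t\<bar>" using D(2) by (simp add: abs_mult mult_right_mono)
        ultimately show "\<bar>f s - f t\<bar> \<le> (B + e) * \<bar>s - t\<bar>" by (simp add: distrib_right)
      qed
    qed
    then obtain rr where rr: "\<And>t. t \<in> {a..b} - N \<Longrightarrow> rr t > 0 \<and> (\<forall>s. \<bar>s - t\<bar> < rr t \<longrightarrow> \<bar>f s - f t\<bar> \<le> (B + e) * \<bar>s - t\<bar>)"
      by metis
    define g where "g t = (if t \<in> N then G else if t \<in> {a..b} then ball t (rr t) else ball t 1)" for t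
    have "gauge g"
      unfolding gauge_def g_def using G rr by auto
    then obtain p where p: "p tagged_division_of {a..b}" "g fine p"
      using fine_division_exists_real by blast
    have finp: "finite p" using p by auto
    have eq: "(\<Sum>(x,K)\<in>p. f (Sup K) - f (Inf K)) = f b - f a"
      using additive_tagged_division_1[OF ab p(1)] by simp
    define h where "h = (\<lambda>(x::real, K::real set). \<bar>f (Sup K) - f (Inf K)\<bar>)"
    define p1 where "p1 = {xk\<in>p. fst xk \<notin> N}"
    define p2 where "p2 = {xk\<in>p. fst xk \<in> N}"
    have "\<bar>f b - f a\<bar> \<le> (\<Sum>xk\<in>p. h xk)"
      unfolding eq[symmetric] h_def by (rule order_trans[OF sum_abs]) (simp add: case_prod_unfold)
    also have "\<dots> = (\<Sum>xk\<in>p1. h xk) + (\<Sum>xk\<in>p2. h xk)"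
    proof -
      have "p = p1 \<union> p2" "p1 \<inter> p2 = {}" unfolding p1_def p2_def by auto
      then show ?thesis using finp by (metis finite_Un sum.union_disjoint)
    qed
    also have "(\<Sum>xk\<in>p1. h xk) \<le> (B + e) * (b - a)"
    proof -
      have "(\<Sum>xk\<in>p1. h xk) \<le> (\<Sum>xk\<in>p1. (B + e) * measure lborel (snd xk))"
      proof (rule sum_mono)
        fix xk assume xk: "xk \<in> p1"
        obtain x K where xK: "xk = (x, K)" by fastforce
        have xKp: "(x, K) \<in> p" "x \<notin> N" using xk xK p1_def by auto
        have xinK: "x \<in> K" and Ksub: "K \<subseteq> {a..b}" using p(1) xKp(1) by auto
        obtain c d where cd: "K = cbox c d" using p(1) xKp(1) by (meson tagged_division_ofD(4))
        have Kg: "K \<subseteq> g x" using p(2) xKp(1) by (auto simp: fine_def)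
        have xab: "x \<in> {a..b}" using xinK Ksub by auto
        then have gx: "g x = ball x (rr x)" using xKp(2) by (simp add: g_def)
        have cdK: "c \<le> x" "x \<le> d" using xinK cd by auto
        then have SI: "Sup K = d" "Inf K = c" "measure lborel K = d - c" using cd by auto
        have "c \<in> K" "d \<in> K" using cd cdK by auto
        then have "\<bar>c - x\<bar> < rr x" "\<bar>d - x\<bar> < rr x" using Kg gx by (auto simp: dist_real_def)
        then have "\<bar>f c - f x\<bar> \<le> (B + e) * \<bar>c - x\<bar>" "\<bar>f d - f x\<bar> \<le> (B + e) * \<bar>d - x\<bar>"
          using rr[of x] xab xKp(2) by auto
        moreover have "\<bar>c - x\<bar> = x - c" "\<bar>d - x\<bar> = d - x" using cdK by auto
        ultimately have "\<bar>f c - f x\<bar> \<le> (B + e) * (x - c)" "\<bar>f d - f x\<bar> \<le> (B + e) * (d - x)" by auto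
        moreover have "(B + e) * (x - c) + (B + e) * (d - x) = (B + e) * (d - c)" by (simp add: algebra_simps)
        ultimately have "\<bar>f d - f c\<bar> \<le> (B + e) * (d - c)" by linarith
        then show "h xk \<le> (B + e) * measure lborel (snd xk)" using xK SI h_def by simp
      qed
      also have "\<dots> \<le> (\<Sum>xk\<in>p. (B + e) * measure lborel (snd xk))"
        using finp B e by (intro sum_mono2) (auto simp: p1_def)
      also have "\<dots> = (B + e) * (b - a)"
      proof -
        have "(\<Sum>xk\<in>p. measure lborel (snd xk)) = measure lborel (cbox a b)"
          using additive_content_tagged_division[of p a b] p(1) by (simp add: case_prod_unfold)
        then show ?thesis using ab by (simp add: sum_distrib_left[symmetric])
      qed
      finally show ?thesis .
    qed
    also have "(\<Sum>xk\<in>p2. h xk) \<le> e"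
    proof -
      have facts: "\<exists>c d. K = {c..d} \<and> c \<le> d \<and> x \<in> K \<and> K \<subseteq> {a..b}" if xKp: "(x, K) \<in> p" for x K
      proof -
        obtain c d where "K = cbox c d" using p(1) xKp by (meson tagged_division_ofD(4))
        moreover have "x \<in> K" "K \<subseteq> {a..b}" using p(1) xKp by auto
        ultimately show ?thesis by auto
      qed
      define q where "q = {xk\<in>p2. Inf (snd xk) < Sup (snd xk)}"
      have finp2: "finite p2" using finp by (simp add: p2_def)
      have "(\<Sum>xk\<in>p2. h xk) = (\<Sum>xk\<in>q. h xk)"
      proof (rule sum.mono_neutral_right[OF finp2])
        show "q \<subseteq> p2" by (auto simp: q_def)
        show "\<forall>i\<in>p2 - q. h i = 0"
        proof
          fix xk assume xk: "xk \<in> p2 - q"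
          obtain x K where xK: "xk = (x, K)" by fastforce
          then have "(x, K) \<in> p" using xk by (auto simp: p2_def)
          then obtain c d where cd: "K = {c..d}" "c \<le> d" using facts by blast
          then have "\<not> c < d" using xk xK by (auto simp: q_def)
          then have "c = d" using cd by auto
          then show "h xk = 0" using xK cd by (simp add: h_def)
        qed
      qed
      have intK: "interior K \<noteq> {}" if hq: "xk \<in> q" "K = snd xk" for xk K
      proof -
        obtain x where xK: "(x, K) \<in> p" "Inf K < Sup K" using hq by (cases xk) (auto simp: q_def p2_def)
        obtain c d where cd: "K = {c..d}" "c \<le> d" using facts[OF xK(1)] by blast
        then have "c < d" using xK(2) by auto
        then show ?thesis using cd by auto
      qed
      have injq: "inj_on snd q"
      proof (rule inj_onI)
        fix xk yk assume xy: "xk \<in> q" "yk \<in> q" "snd xk = snd yk"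
        show "xk = yk"
        proof (rule ccontr)
          assume ne: "xk \<noteq> yk"
          obtain x K where xK: "xk = (x, K)" by fastforce
          obtain y K' where yK: "yk = (y, K')" by fastforce
          have "(x, K) \<in> p" "(y, K') \<in> p" using xy xK yK by (auto simp: q_def p2_def)
          then have "interior K \<inter> interior K' = {}"
            using ne xK yK tagged_division_ofD(5)[OF p(1)] by blast
          then have "interior (snd xk) \<inter> interior (snd yk) = {}" using xK yK by simp
          then show False using intK[OF xy(1) refl] xy(3) by simp
        qed
      qed
      define Ks where "Ks = snd ` q"
      have "(\<Sum>xk\<in>q. h xk) = (\<Sum>K\<in>Ks. \<bar>f (Sup K) - f (Inf K)\<bar>)"
        unfolding Ks_def sum.reindex[OF injq] by (simp add: h_def case_prod_unfold)
      have finKs: "finite Ks" using finp2 by (simp add: Ks_def q_def)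
      have Kprop: "Inf K < Sup K \<and> K = {Inf K..Sup K} \<and> K \<subseteq> {a..b} \<and> K \<subseteq> G" if hK: "K \<in> Ks" for K
      proof -
        obtain x where xK: "(x, K) \<in> p" "x \<in> N" "Inf K < Sup K" using hK by (auto simp: Ks_def q_def p2_def)
        obtain c d where cd: "K = {c..d}" "c \<le> d" "K \<subseteq> {a..b}" using facts[OF xK(1)] by blast
        have "K \<subseteq> g x" using p(2) xK(1) by (auto simp: fine_def)
        then have "K \<subseteq> G" using xK(2) by (simp add: g_def)
        moreover have "K = {Inf K..Sup K}" using cd by simp
        ultimately show ?thesis using cd xK by blast
      qed
      have Kdisj: "Sup K \<le> Inf K' \<or> Sup K' \<le> Inf K" if hK: "K \<in> Ks" "K' \<in> Ks" "K \<noteq> K'" for K K'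
      proof -
        obtain xk where xk: "xk \<in> q" "K = snd xk" using hK(1) by (auto simp: Ks_def)
        obtain yk where yk: "yk \<in> q" "K' = snd yk" using hK(2) by (auto simp: Ks_def)
        obtain x where x: "xk = (x, K)" using xk(2) by (cases xk) auto
        obtain y where y: "yk = (y, K')" using yk(2) by (cases yk) auto
        have ne: "(x, K) \<noteq> (y, K')" using hK(3) by auto
        have inp: "(x, K) \<in> p" "(y, K') \<in> p" using xk(1) yk(1) x y by (auto simp: q_def p2_def)
        have dis: "interior K \<inter> interior K' = {}"
          by (rule tagged_division_ofD(5)[OF p(1) inp ne])
        have P1: "K = {Inf K..Sup K}" "Inf K < Sup K" using Kprop[OF hK(1)] by auto
        have P2: "K' = {Inf K'..Sup K'}" "Inf K' < Sup K'" using Kprop[OF hK(2)] by auto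
        have "interior K = {Inf K<..<Sup K}" by (subst P1(1)) simp
        moreover have "interior K' = {Inf K'<..<Sup K'}" by (subst P2(1)) simp
        ultimately have dis2: "{Inf K<..<Sup K} \<inter> {Inf K'<..<Sup K'} = {}" using dis by simp
        show ?thesis
        proof (rule ccontr)
          assume "\<not> (Sup K \<le> Inf K' \<or> Sup K' \<le> Inf K)"
          then have "(max (Inf K) (Inf K') + min (Sup K) (Sup K')) / 2 \<in> {Inf K<..<Sup K} \<inter> {Inf K'<..<Sup K'}"
            using P1(2) P2(2) by (simp add: max_def min_def)
          then show False using dis2 by blast
        qed
      qed
      obtain \<phi> where \<phi>: "bij_betw \<phi> {0..<card Ks} Ks" using ex_bij_betw_nat_finite[OF finKs] by blast
      define n where "n = card Ks"
      define aa where "aa k = Inf (\<phi> k)" for k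
      define bb where "bb k = Sup (\<phi> k)" for k
      have \<phi>in: "\<phi> k \<in> Ks" if "k < n" for k using \<phi> that by (auto simp: n_def bij_betw_def)
      have \<phi>inj: "\<phi> k \<noteq> \<phi> l" if "k < n" "l < n" "k \<noteq> l" for k l
        using \<phi> that by (auto simp: n_def bij_betw_def inj_on_def)
      have c1: "\<forall>k<n. aa k \<le> bb k \<and> {aa k..bb k} \<subseteq> {a..b}"
      proof (intro allI impI)
        fix k assume "k < n"
        then have "\<phi> k \<in> Ks" by (rule \<phi>in)
        from Kprop[OF this] have "Inf (\<phi> k) < Sup (\<phi> k)" "{Inf (\<phi> k)..Sup (\<phi> k)} \<subseteq> {a..b}" by auto
        then show "aa k \<le> bb k \<and> {aa k..bb k} \<subseteq> {a..b}" unfolding aa_def bb_def by simp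
      qed
      have c2: "\<forall>k<n. \<forall>l<n. k \<noteq> l \<longrightarrow> bb k \<le> aa l \<or> bb l \<le> aa k"
      proof (intro allI impI)
        fix k l assume "k < n" "l < n" "k \<noteq> l"
        then show "bb k \<le> aa l \<or> bb l \<le> aa k"
          unfolding aa_def bb_def by (intro Kdisj \<phi>in \<phi>inj)
      qed
      have "(\<Sum>k<n. bb k - aa k) = (\<Sum>k\<in>{..<n}. measure lebesgue {aa k..bb k})"
        using c1 by (intro sum.cong) auto
      also have "\<dots> = measure lebesgue (\<Union>k\<in>{..<n}. {aa k..bb k})"
      proof (rule measure_negligible_finite_Union_image[symmetric])
        show "pairwise (\<lambda>k l. negligible ({aa k..bb k} \<inter> {aa l..bb l})) {..<n}"
        unfolding pairwise_def
        proof (intro ballI impI)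
          fix k l assume kl: "k \<in> {..<n}" "l \<in> {..<n}" "k \<noteq> l"
          then have "bb k \<le> aa l \<or> bb l \<le> aa k" using c2 by auto
          then have "{aa k..bb k} \<inter> {aa l..bb l} \<subseteq> {bb k, bb l}" by auto
          then show "negligible ({aa k..bb k} \<inter> {aa l..bb l})"
            by (meson finite.emptyI finite_insert negligible_finite negligible_subset)
        qed
      qed auto
      also have "\<dots> \<le> measure lebesgue G"
      proof (rule measure_mono_fmeasurable)
        show "(\<Union>k\<in>{..<n}. {aa k..bb k}) \<subseteq> G" using Kprop \<phi>in unfolding aa_def bb_def by blast
      qed (use G in auto)
      also have "\<dots> < \<delta>" by fact
      finally have "(\<Sum>k<n. norm (f (bb k) - f (aa k))) < e"
        using ac\<delta>[OF c1 c2] by blast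
      moreover have "(\<Sum>k<n. norm (f (bb k) - f (aa k))) = (\<Sum>K\<in>Ks. \<bar>f (Sup K) - f (Inf K)\<bar>)"
        using sum.reindex_bij_betw[OF \<phi>, of "\<lambda>K. \<bar>f (Sup K) - f (Inf K)\<bar>"]
        by (simp add: aa_def bb_def n_def lessThan_atLeast0)
      ultimately show ?thesis
        using \<open>(\<Sum>xk\<in>p2. h xk) = (\<Sum>xk\<in>q. h xk)\<close> \<open>(\<Sum>xk\<in>q. h xk) = (\<Sum>K\<in>Ks. \<bar>f (Sup K) - f (Inf K)\<bar>)\<close>
        by linarith
    qed
    finally show ?thesis by simp
  qed
  show ?thesis
  proof (rule field_le_epsilon)
    fix e :: real assume e: "e > 0"
    define e' where "e' = e / (b - a + 1)"
    have e': "e' > 0" using e ab by (simp add: e'_def)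
    have "(B + e') * (b - a) + e' = B * (b - a) + e' * (b - a + 1)" by (simp add: algebra_simps)
    also have "\<dots> = B * (b - a) + e" using ab by (simp add: e'_def)
    finally show "\<bar>f b - f a\<bar> \<le> B * (b - a) + e" using main[OF e'] by simp
  qed
qed



lemma abs_cont_subset:
  assumes ac: "abs_cont_on S f" and sub: "S' \<subseteq> S"
  shows "abs_cont_on S' f"
  unfolding abs_cont_on_def
proof (intro allI impI)
  fix e :: real assume e: "e > 0"
  obtain \<delta> where \<delta>: "\<delta> > 0" and H: "\<And>(n::nat) aa bb. (\<forall>k<n. aa k \<le> bb k \<and> {aa k..bb k} \<subseteq> S) \<Longrightarrow>
        (\<forall>k<n. \<forall>l<n. k \<noteq> l \<longrightarrow> bb k \<le> aa l \<or> bb l \<le> aa k) \<Longrightarrow> (\<Sum>k<n. bb k - aa k) < \<delta>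
        \<Longrightarrow> (\<Sum>k<n. norm (f (bb k) - f (aa k))) < e"
    using ac_delta[OF ac e] by blast
  show "\<exists>\<delta>>0. \<forall>(n::nat) aa bb. (\<forall>k<n. aa k \<le> bb k \<and> {aa k..bb k} \<subseteq> S') \<and>
        (\<forall>k<n. \<forall>l<n. k \<noteq> l \<longrightarrow> bb k \<le> aa l \<or> bb l \<le> aa k) \<and> (\<Sum>k<n. bb k - aa k) < \<delta>
        \<longrightarrow> (\<Sum>k<n. norm (f (bb k) - f (aa k))) < e"
  proof (intro exI conjI allI impI)
    show "\<delta> > 0" by fact
    fix n :: nat and aa bb :: "nat \<Rightarrow> real"
    assume A: "(\<forall>k<n. aa k \<le> bb k \<and> {aa k..bb k} \<subseteq> S') \<and>
        (\<forall>k<n. \<forall>l<n. k \<noteq> l \<longrightarrow> bb k \<le> aa l \<or> bb l \<le> aa k) \<and> (\<Sum>k<n. bb k - aa k) < \<delta>"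
    have A1: "\<forall>k<n. aa k \<le> bb k \<and> {aa k..bb k} \<subseteq> S" using A sub by blast
    show "(\<Sum>k<n. norm (f (bb k) - f (aa k))) < e"
      using H[OF A1 conjunct1[OF conjunct2[OF A]] conjunct2[OF conjunct2[OF A]]] .
  qed
qed

lemma abs_cont_const: "abs_cont_on S (\<lambda>t. c)"
  unfolding abs_cont_on_def by auto

lemma abs_cont_linear:
  assumes ac: "abs_cont_on S f" and L: "bounded_linear L"
  shows "abs_cont_on S (\<lambda>t. L (f t))"
  unfolding abs_cont_on_def
proof (intro allI impI)
  fix e :: real assume e: "e > 0"
  obtain K where K: "K > 0" "\<And>x. norm (L x) \<le> norm x * K" using bounded_linear.pos_bounded[OF L] by blast
  have "e / K > 0" using e K by simp
  then obtain \<delta> where \<delta>: "\<delta> > 0" and H: "\<And>(n::nat) aa bb. (\<forall>k<n. aa k \<le> bb k \<and> {aa k..bb k} \<subseteq> S) \<Longrightarrow>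
        (\<forall>k<n. \<forall>l<n. k \<noteq> l \<longrightarrow> bb k \<le> aa l \<or> bb l \<le> aa k) \<Longrightarrow> (\<Sum>k<n. bb k - aa k) < \<delta>
        \<Longrightarrow> (\<Sum>k<n. norm (f (bb k) - f (aa k))) < e / K"
    using ac_delta[OF ac] by blast
  show "\<exists>\<delta>>0. \<forall>(n::nat) aa bb. (\<forall>k<n. aa k \<le> bb k \<and> {aa k..bb k} \<subseteq> S) \<and>
        (\<forall>k<n. \<forall>l<n. k \<noteq> l \<longrightarrow> bb k \<le> aa l \<or> bb l \<le> aa k) \<and> (\<Sum>k<n. bb k - aa k) < \<delta>
        \<longrightarrow> (\<Sum>k<n. norm (L (f (bb k)) - L (f (aa k)))) < e"
  proof (intro exI conjI allI impI)
    show "\<delta> > 0" by fact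
    fix n :: nat and aa bb :: "nat \<Rightarrow> real"
    assume A: "(\<forall>k<n. aa k \<le> bb k \<and> {aa k..bb k} \<subseteq> S) \<and>
        (\<forall>k<n. \<forall>l<n. k \<noteq> l \<longrightarrow> bb k \<le> aa l \<or> bb l \<le> aa k) \<and> (\<Sum>k<n. bb k - aa k) < \<delta>"
    have "(\<Sum>k<n. norm (L (f (bb k)) - L (f (aa k)))) \<le> (\<Sum>k<n. norm (f (bb k) - f (aa k)) * K)"
      by (intro sum_mono) (metis K(2) linear_diff[OF bounded_linear.linear[OF L]])
    also have "\<dots> = (\<Sum>k<n. norm (f (bb k) - f (aa k))) * K" by (simp add: sum_distrib_right)
    also have "\<dots> < e / K * K"
      using H[OF conjunct1[OF A] conjunct1[OF conjunct2[OF A]] conjunct2[OF conjunct2[OF A]]] K(1)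
      by (rule mult_strict_right_mono)
    also have "\<dots> = e" using K(1) by simp
    finally show "(\<Sum>k<n. norm (L (f (bb k)) - L (f (aa k)))) < e" .
  qed
qed

lemma abs_cont_add:
  assumes f: "abs_cont_on S f" and g: "abs_cont_on S g"
  shows "abs_cont_on S (\<lambda>t. f t + g t)"
  unfolding abs_cont_on_def
proof (intro allI impI)
  fix e :: real assume e: "e > 0"
  then have e2: "e / 2 > 0" by simp
  obtain \<delta>1 where \<delta>1: "\<delta>1 > 0" and H1: "\<And>(n::nat) aa bb. (\<forall>k<n. aa k \<le> bb k \<and> {aa k..bb k} \<subseteq> S) \<Longrightarrow>
        (\<forall>k<n. \<forall>l<n. k \<noteq> l \<longrightarrow> bb k \<le> aa l \<or> bb l \<le> aa k) \<Longrightarrow> (\<Sum>k<n. bb k - aa k) < \<delta>1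
        \<Longrightarrow> (\<Sum>k<n. norm (f (bb k) - f (aa k))) < e / 2"
    using ac_delta[OF f e2] by blast
  obtain \<delta>2 where \<delta>2: "\<delta>2 > 0" and H2: "\<And>(n::nat) aa bb. (\<forall>k<n. aa k \<le> bb k \<and> {aa k..bb k} \<subseteq> S) \<Longrightarrow>
        (\<forall>k<n. \<forall>l<n. k \<noteq> l \<longrightarrow> bb k \<le> aa l \<or> bb l \<le> aa k) \<Longrightarrow> (\<Sum>k<n. bb k - aa k) < \<delta>2
        \<Longrightarrow> (\<Sum>k<n. norm (g (bb k) - g (aa k))) < e / 2"
    using ac_delta[OF g e2] by blast
  show "\<exists>\<delta>>0. \<forall>(n::nat) aa bb. (\<forall>k<n. aa k \<le> bb k \<and> {aa k..bb k} \<subseteq> S) \<and>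
        (\<forall>k<n. \<forall>l<n. k \<noteq> l \<longrightarrow> bb k \<le> aa l \<or> bb l \<le> aa k) \<and> (\<Sum>k<n. bb k - aa k) < \<delta>
        \<longrightarrow> (\<Sum>k<n. norm ((f (bb k) + g (bb k)) - (f (aa k) + g (aa k)))) < e"
  proof (intro exI conjI allI impI)
    show "min \<delta>1 \<delta>2 > 0" using \<delta>1 \<delta>2 by simp
    fix n :: nat and aa bb :: "nat \<Rightarrow> real"
    assume A: "(\<forall>k<n. aa k \<le> bb k \<and> {aa k..bb k} \<subseteq> S) \<and>
        (\<forall>k<n. \<forall>l<n. k \<noteq> l \<longrightarrow> bb k \<le> aa l \<or> bb l \<le> aa k) \<and> (\<Sum>k<n. bb k - aa k) < min \<delta>1 \<delta>2"
    have A1: "\<forall>k<n. aa k \<le> bb k \<and> {aa k..bb k} \<subseteq> S" and A2: "\<forall>k<n. \<forall>l<n. k \<noteq> l \<longrightarrow> bb k \<le> aa l \<or> bb l \<le> aa k"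
      and A3: "(\<Sum>k<n. bb k - aa k) < min \<delta>1 \<delta>2" using A by blast+
    have "(\<Sum>k<n. bb k - aa k) < \<delta>1" "(\<Sum>k<n. bb k - aa k) < \<delta>2" using A3 by auto
    note B = H1[OF A1 A2 this(1)] H2[OF A1 A2 this(2)]
    have "(\<Sum>k<n. norm ((f (bb k) + g (bb k)) - (f (aa k) + g (aa k))))
        \<le> (\<Sum>k<n. norm (f (bb k) - f (aa k)) + norm (g (bb k) - g (aa k)))"
    proof (intro sum_mono)
      fix k
      have "(f (bb k) + g (bb k)) - (f (aa k) + g (aa k)) = (f (bb k) - f (aa k)) + (g (bb k) - g (aa k))"
        by (simp add: algebra_simps)
      then show "norm ((f (bb k) + g (bb k)) - (f (aa k) + g (aa k))) \<le> norm (f (bb k) - f (aa k)) + norm (g (bb k) - g (aa k))"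
        by (metis norm_triangle_ineq)
    qed
    also have "\<dots> = (\<Sum>k<n. norm (f (bb k) - f (aa k))) + (\<Sum>k<n. norm (g (bb k) - g (aa k)))"
      by (simp add: sum.distrib)
    also have "(\<Sum>k<n. norm (f (bb k) - f (aa k))) + (\<Sum>k<n. norm (g (bb k) - g (aa k))) < e / 2 + e / 2"
      using B by (rule add_strict_mono)
    finally show "(\<Sum>k<n. norm ((f (bb k) + g (bb k)) - (f (aa k) + g (aa k)))) < e" by simp
  qed
qed

lemma abs_cont_id: "abs_cont_on S (\<lambda>t::real. t)"
  unfolding abs_cont_on_def
proof (intro allI impI)
  fix e :: real assume e: "e > 0"
  show "\<exists>\<delta>>0. \<forall>(n::nat) aa bb. (\<forall>k<n. aa k \<le> bb k \<and> {aa k..bb k} \<subseteq> S) \<and>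
        (\<forall>k<n. \<forall>l<n. k \<noteq> l \<longrightarrow> bb k \<le> aa l \<or> bb l \<le> aa k) \<and> (\<Sum>k<n. bb k - aa k) < \<delta>
        \<longrightarrow> (\<Sum>k<n. norm (bb k - aa k)) < e"
  proof (intro exI conjI allI impI)
    show "e > 0" by fact
    fix n :: nat and aa bb :: "nat \<Rightarrow> real"
    assume A: "(\<forall>k<n. aa k \<le> bb k \<and> {aa k..bb k} \<subseteq> S) \<and>
        (\<forall>k<n. \<forall>l<n. k \<noteq> l \<longrightarrow> bb k \<le> aa l \<or> bb l \<le> aa k) \<and> (\<Sum>k<n. bb k - aa k) < e"
    have "(\<Sum>k<n. norm (bb k - aa k)) = (\<Sum>k<n. bb k - aa k)"
      using A by (intro sum.cong) auto
    then show "(\<Sum>k<n. norm (bb k - aa k)) < e" using A by simp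
  qed
qed

lemma abs_cont_continuous:
  assumes ac: "abs_cont_on {a..b} f"
  shows "continuous_on {a..b} f"
  unfolding continuous_on_iff
proof (intro ballI allI impI)
  fix x e :: real assume x: "x \<in> {a..b}" and e: "e > 0"
  obtain \<delta> where \<delta>: "\<delta> > 0" and H: "\<And>(n::nat) aa bb. (\<forall>k<n. aa k \<le> bb k \<and> {aa k..bb k} \<subseteq> {a..b}) \<Longrightarrow>
        (\<forall>k<n. \<forall>l<n. k \<noteq> l \<longrightarrow> bb k \<le> aa l \<or> bb l \<le> aa k) \<Longrightarrow> (\<Sum>k<n. bb k - aa k) < \<delta>
        \<Longrightarrow> (\<Sum>k<n. norm (f (bb k) - f (aa k))) < e"
    using ac_delta[OF ac e] by blast
  show "\<exists>d>0. \<forall>x'\<in>{a..b}. dist x' x < d \<longrightarrow> dist (f x') (f x) < e"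
  proof (intro exI conjI ballI impI)
    show "\<delta> > 0" by fact
    fix x' assume x': "x' \<in> {a..b}" and d: "dist x' x < \<delta>"
    define aa where "aa = (\<lambda>k::nat. min x x')"
    define bb where "bb = (\<lambda>k::nat. max x x')"
    have "(\<Sum>k<Suc 0. norm (f (bb k) - f (aa k))) < e"
      by (rule H) (use x x' d in \<open>auto simp: aa_def bb_def dist_real_def\<close>)
    then have "norm (f (max x x') - f (min x x')) < e" by (simp add: aa_def bb_def)
    then show "dist (f x') (f x) < e"
      by (cases "x \<le> x'") (auto simp: dist_norm max_def min_def norm_minus_commute)
  qed
qed

lemma X1_eq: "X 1 p = (1, 0, - fst (snd p) / 2)"
  by (cases p) (simp add: X_def)
lemma X2_eq: "X 2 p = (0, 1, fst p / 2)"
  by (cases p) (simp add: X_def)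

lemma DX1: "frechet_derivative (X 1) (at p) = (\<lambda>v. (0, 0, - fst (snd v) / 2))"
proof -
  have "(X 1 has_derivative (\<lambda>v. (0, 0, - fst (snd v) / 2))) (at p)"
    unfolding X1_eq[abs_def]
    by (auto intro!: derivative_eq_intros)
  then show ?thesis by (metis frechet_derivative_at)
qed

lemma DX2: "frechet_derivative (X 2) (at p) = (\<lambda>v. (0, 0, fst v / 2))"
proof -
  have "(X 2 has_derivative (\<lambda>v. (0, 0, fst v / 2))) (at p)"
    unfolding X2_eq[abs_def]
    by (auto intro!: derivative_eq_intros)
  then show ?thesis by (metis frechet_derivative_at)
qed

lemma phi1: "phi lam \<gamma> 1 t = fst (lam t) - snd (snd (lam t)) * fst (snd (\<gamma> t)) / 2"
  unfolding phi_def X1_eq by (simp add: inner_prod_def)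
lemma phi2: "phi lam \<gamma> 2 t = fst (snd (lam t)) + snd (snd (lam t)) * fst (\<gamma> t) / 2"
  unfolding phi_def X2_eq by (simp add: inner_prod_def)



lemma vsum_eq: "(\<Sum>i\<in>{1::nat,2}. c i *\<^sub>R X i p) = (c 1, c 2, c 2 * fst p / 2 - c 1 * fst (snd p) / 2)"
proof -
  have "(\<Sum>i\<in>{1::nat,2}. c i *\<^sub>R X i p) = c 1 *\<^sub>R X 1 p + c 2 *\<^sub>R X 2 p" by simp
  also have "\<dots> = (c 1, c 2, c 2 * fst p / 2 - c 1 * fst (snd p) / 2)"
    unfolding X1_eq X2_eq by (simp add: algebra_simps)
  finally show ?thesis .
qed

lemma comp_derivs:
  assumes "(\<gamma> has_vector_derivative (v::pt)) (at t)"
  shows "((\<lambda>s. fst (\<gamma> s)) has_real_derivative fst v) (at t)"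
    "((\<lambda>s. fst (snd (\<gamma> s))) has_real_derivative fst (snd v)) (at t)"
    "((\<lambda>s. snd (snd (\<gamma> s))) has_real_derivative snd (snd v)) (at t)"
proof -
  have l2: "bounded_linear (\<lambda>p::pt. fst (snd p))" "bounded_linear (\<lambda>p::pt. snd (snd p))"
    using bounded_linear_compose[OF bounded_linear_fst bounded_linear_snd]
      bounded_linear_compose[OF bounded_linear_snd bounded_linear_snd] by auto
  show "((\<lambda>s. fst (\<gamma> s)) has_real_derivative fst v) (at t)"
    using bounded_linear.has_vector_derivative[OF bounded_linear_fst assms]
    by (simp add: has_real_derivative_iff_has_vector_derivative)
  show "((\<lambda>s. fst (snd (\<gamma> s))) has_real_derivative fst (snd v)) (at t)"
    using bounded_linear.has_vector_derivative[OF l2(1) assms]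
    by (simp add: has_real_derivative_iff_has_vector_derivative)
  show "((\<lambda>s. snd (snd (\<gamma> s))) has_real_derivative snd (snd v)) (at t)"
    using bounded_linear.has_vector_derivative[OF l2(2) assms]
    by (simp add: has_real_derivative_iff_has_vector_derivative)
qed

lemma admissible_derivs:
  assumes "admissible T \<gamma> u"
  shows "AE t in lebesgue. t \<in> {0..T} \<longrightarrow> \<bar>u 1 t\<bar> \<le> 1 \<and> \<bar>u 2 t\<bar> \<le> 1 \<and>
     ((\<lambda>s. fst (\<gamma> s)) has_real_derivative u 1 t) (at t) \<and>
     ((\<lambda>s. fst (snd (\<gamma> s))) has_real_derivative u 2 t) (at t) \<and>
     ((\<lambda>s. snd (snd (\<gamma> s))) has_real_derivative (u 2 t * fst (\<gamma> t) / 2 - u 1 t * fst (snd (\<gamma> t)) / 2)) (at t)"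
proof -
  have A: "AE t in lebesgue. t \<in> {0..T} \<longrightarrow>
        (\<forall>i\<in>{1,2}. \<bar>u i t\<bar> \<le> 1) \<and>
        (\<gamma> has_vector_derivative (\<Sum>i\<in>{1,2}. u i t *\<^sub>R X i (\<gamma> t))) (at t)"
    using assms unfolding admissible_def by blast
  show ?thesis
  proof (rule eventually_mono[OF A], intro impI)
    fix t assume H: "t \<in> {0..T} \<longrightarrow> (\<forall>i\<in>{1,2}. \<bar>u i t\<bar> \<le> 1) \<and>
        (\<gamma> has_vector_derivative (\<Sum>i\<in>{1,2}. u i t *\<^sub>R X i (\<gamma> t))) (at t)" and t: "t \<in> {0..T}"
    have D: "(\<gamma> has_vector_derivative (u 1 t, u 2 t, u 2 t * fst (\<gamma> t) / 2 - u 1 t * fst (snd (\<gamma> t)) / 2)) (at t)"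
      using H t vsum_eq[of "\<lambda>i. u i t" "\<gamma> t"] by simp
    show "\<bar>u 1 t\<bar> \<le> 1 \<and> \<bar>u 2 t\<bar> \<le> 1 \<and>
     ((\<lambda>s. fst (\<gamma> s)) has_real_derivative u 1 t) (at t) \<and>
     ((\<lambda>s. fst (snd (\<gamma> s))) has_real_derivative u 2 t) (at t) \<and>
     ((\<lambda>s. snd (snd (\<gamma> s))) has_real_derivative (u 2 t * fst (\<gamma> t) / 2 - u 1 t * fst (snd (\<gamma> t)) / 2)) (at t)"
      using H t comp_derivs[OF D] by simp
  qed
qed

lemma extremal_lam_derivs:
  assumes "extremal_pair T lam \<gamma> u"
  shows "AE t in lebesgue. t \<in> {0..T} \<longrightarrow>
     ((\<lambda>s. fst (lam s)) has_real_derivative - (u 2 t * snd (snd (lam t)) / 2)) (at t) \<and>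
     ((\<lambda>s. fst (snd (lam s))) has_real_derivative u 1 t * snd (snd (lam t)) / 2) (at t) \<and>
     ((\<lambda>s. snd (snd (lam s))) has_real_derivative 0) (at t)"
proof -
  have A: "AE t in lebesgue. t \<in> {0..T} \<longrightarrow>
        (\<exists>\<mu>. (lam has_vector_derivative \<mu>) (at t) \<and>
             (\<forall>v. inner \<mu> v = - (\<Sum>i\<in>{1,2}. u i t * inner (lam t) (frechet_derivative (X i) (at (\<gamma> t)) v))))"
    using assms unfolding extremal_pair_def by blast
  show ?thesis
  proof (rule eventually_mono[OF A], intro impI)
    fix t assume H: "t \<in> {0..T} \<longrightarrow> (\<exists>\<mu>. (lam has_vector_derivative \<mu>) (at t) \<and>
             (\<forall>v. inner \<mu> v = - (\<Sum>i\<in>{1,2}. u i t * inner (lam t) (frechet_derivative (X i) (at (\<gamma> t)) v))))"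
      and t: "t \<in> {0..T}"
    obtain \<mu> where mu: "(lam has_vector_derivative \<mu>) (at t)"
      "\<And>v. inner \<mu> v = - (\<Sum>i\<in>{1,2}. u i t * inner (lam t) (frechet_derivative (X i) (at (\<gamma> t)) v))"
      using H t by blast
    have inn: "inner \<mu> v = - (u 1 t * (snd (snd (lam t)) * (- fst (snd v) / 2)) + u 2 t * (snd (snd (lam t)) * (fst v / 2)))" for v
    proof -
      have "(\<Sum>i\<in>{1::nat,2}. u i t * inner (lam t) (frechet_derivative (X i) (at (\<gamma> t)) v))
          = u 1 t * inner (lam t) (frechet_derivative (X 1) (at (\<gamma> t)) v) + u 2 t * inner (lam t) (frechet_derivative (X 2) (at (\<gamma> t)) v)"
        by simp
      also have "\<dots> = u 1 t * (snd (snd (lam t)) * (- fst (snd v) / 2)) + u 2 t * (snd (snd (lam t)) * (fst v / 2))"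
        unfolding DX1 DX2 by (simp add: inner_prod_def)
      finally show ?thesis using mu(2)[of v] by simp
    qed
    have m1: "fst \<mu> = - (u 2 t * snd (snd (lam t)) / 2)" using inn[of "(1,0,0)"] by (simp add: inner_prod_def)
    have m2: "fst (snd \<mu>) = u 1 t * snd (snd (lam t)) / 2" using inn[of "(0,1,0)"] by (simp add: inner_prod_def)
    have m3: "snd (snd \<mu>) = 0" using inn[of "(0,0,1)"] by (simp add: inner_prod_def)
    show "((\<lambda>s. fst (lam s)) has_real_derivative - (u 2 t * snd (snd (lam t)) / 2)) (at t) \<and>
     ((\<lambda>s. fst (snd (lam s))) has_real_derivative u 1 t * snd (snd (lam t)) / 2) (at t) \<and>
     ((\<lambda>s. snd (snd (lam s))) has_real_derivative 0) (at t)"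
      using comp_derivs[OF mu(1)] m1 m2 m3 by simp
  qed
qed

lemma ac_const:
  assumes ac: "abs_cont_on {0..T} f" and der: "AE t in lebesgue. t \<in> {0<..<T} \<longrightarrow> (f has_real_derivative 0) (at t)"
    and t: "t \<in> {0..T}"
  shows "f t = f 0"
proof -
  have "\<bar>f t - f 0\<bar> \<le> 0 * (t - 0)"
  proof (rule ac_bound)
    show "0 \<le> t" using t by simp
    show "abs_cont_on {0..t} f" using abs_cont_subset[OF ac] t by simp
    show "AE s in lebesgue. s \<in> {0<..<t} \<longrightarrow> (\<exists>D. (f has_real_derivative D) (at s) \<and> \<bar>D\<bar> \<le> 0)"
      by (rule eventually_mono[OF der]) (use t in auto)
  qed simp
  then show ?thesis by simp
qed

lemma AE_exists_in:
  assumes ab: "a < (b::real)" and P: "AE t in lebesgue. P t"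
  shows "\<exists>t\<in>{a<..<b}. P t"
proof (rule ccontr)
  assume "\<not> (\<exists>t\<in>{a<..<b}. P t)"
  then have "AE t in lebesgue. t \<notin> {a<..<b}" by (rule_tac eventually_mono[OF P]) auto
  then have "{a<..<b} \<in> null_sets lebesgue" by (subst AE_iff_null_sets) auto
  then have "measure lebesgue {a<..<b} = 0" by (rule measure_eq_0_null_sets)
  then show False using ab by simp
qed

lemma cont_ae_const:
  fixes T s :: real
  assumes T: "0 < T" and cont: "continuous_on {0..T} f" and ae: "AE t in lebesgue. t \<in> {0..T} \<longrightarrow> f t = (c::real)"
    and s: "s \<in> {0..T}"
  shows "f s = c"
proof (rule ccontr)
  assume ne: "f s \<noteq> c"
  then have "\<bar>f s - c\<bar> > 0" by simp
  then obtain d where d: "d > 0" "\<forall>x'\<in>{0..T}. dist x' s < d \<longrightarrow> dist (f x') (f s) < \<bar>f s - c\<bar>"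
    using cont s unfolding continuous_on_iff by blast
  define lo where "lo = max 0 (s - d / 2)"
  define hi where "hi = min T (s + d / 2)"
  have "lo < hi" using s T d by (auto simp: lo_def hi_def)
  then obtain t where t: "t \<in> {lo<..<hi}" "t \<in> {0..T} \<longrightarrow> f t = c"
    using AE_exists_in[OF _ ae] by blast
  have "t \<in> {0..T}" "dist t s < d" using t(1) d by (auto simp: lo_def hi_def dist_real_def)
  then have "dist (f t) (f s) < \<bar>f s - c\<bar>" using d(2) by blast
  then show False using t(2) \<open>t \<in> {0..T}\<close> by (simp add: dist_real_def)
qed

lemma deriv_zero_loc:
  assumes "\<forall>s\<in>{a<..<b}. f s = c" "t \<in> {a<..<b}" "(f has_real_derivative D) (at t)"
  shows "D = 0"
proof -
  have "((\<lambda>s. c) has_real_derivative 0) (at t)" by simp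
  then have "(f has_real_derivative 0) (at t)"
    by (rule has_field_derivative_transform_within_open[where S="{a<..<b}"]) (use assms in auto)
  then show ?thesis using assms(3) DERIV_unique by blast
qed



lemma ac_comps:
  assumes "abs_cont_on S (f :: real \<Rightarrow> pt)"
  shows "abs_cont_on S (\<lambda>t. fst (f t))" "abs_cont_on S (\<lambda>t. fst (snd (f t)))" "abs_cont_on S (\<lambda>t. snd (snd (f t)))"
proof -
  have l2: "bounded_linear (\<lambda>p::pt. fst (snd p))" "bounded_linear (\<lambda>p::pt. snd (snd p))"
    using bounded_linear_compose[OF bounded_linear_fst bounded_linear_snd]
      bounded_linear_compose[OF bounded_linear_snd bounded_linear_snd] by auto
  show "abs_cont_on S (\<lambda>t. fst (f t))" by (rule abs_cont_linear[OF assms bounded_linear_fst])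
  show "abs_cont_on S (\<lambda>t. fst (snd (f t)))" by (rule abs_cont_linear[OF assms l2(1)])
  show "abs_cont_on S (\<lambda>t. snd (snd (f t)))" by (rule abs_cont_linear[OF assms l2(2)])
qed

lemma ac_scale: "abs_cont_on S (f :: real \<Rightarrow> real) \<Longrightarrow> abs_cont_on S (\<lambda>t. c * f t)"
  by (rule abs_cont_linear[OF _ bounded_linear_mult_right])

lemma extremal_struct:
  assumes E: "extremal_pair T lam \<gamma> u"
  obtains k C1 C2 where
   "\<forall>t\<in>{0..T}. snd (snd (lam t)) = k \<and> fst (lam t) = C1 - k / 2 * fst (snd (\<gamma> t)) \<and> fst (snd (lam t)) = C2 + k / 2 * fst (\<gamma> t)"
proof -
  have adm: "admissible T \<gamma> u" and acl: "abs_cont_on {0..T} lam" using E by (auto simp: extremal_pair_def)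
  have acg: "abs_cont_on {0..T} \<gamma>" using adm by (simp add: admissible_def)
  note Dl = extremal_lam_derivs[OF E]
  note Dg = admissible_derivs[OF adm]
  note acl3 = ac_comps[OF acl] and acg3 = ac_comps[OF acg]
  define k where "k = snd (snd (lam 0))"
  have pk: "snd (snd (lam t)) = k" if "t \<in> {0..T}" for t
    unfolding k_def
    by (rule ac_const[OF acl3(3) _ that], rule eventually_mono[OF Dl]) auto
  define q1 where "q1 t = fst (lam t) + k / 2 * fst (snd (\<gamma> t))" for t
  define q2 where "q2 t = fst (snd (lam t)) + (- k / 2) * fst (\<gamma> t)" for t
  have acq1: "abs_cont_on {0..T} q1" unfolding q1_def by (intro abs_cont_add acl3 ac_scale acg3)
  have acq2: "abs_cont_on {0..T} q2" unfolding q2_def by (intro abs_cont_add acl3 ac_scale acg3)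
  have DD: "AE t in lebesgue. t \<in> {0<..<T} \<longrightarrow> (q1 has_real_derivative 0) (at t) \<and> (q2 has_real_derivative 0) (at t)"
  proof (rule eventually_mono[OF eventually_conj[OF Dl Dg]], intro impI)
    fix t assume H: "(t \<in> {0..T} \<longrightarrow>
     ((\<lambda>s. fst (lam s)) has_real_derivative - (u 2 t * snd (snd (lam t)) / 2)) (at t) \<and>
     ((\<lambda>s. fst (snd (lam s))) has_real_derivative u 1 t * snd (snd (lam t)) / 2) (at t) \<and>
     ((\<lambda>s. snd (snd (lam s))) has_real_derivative 0) (at t)) \<and>
     (t \<in> {0..T} \<longrightarrow> \<bar>u 1 t\<bar> \<le> 1 \<and> \<bar>u 2 t\<bar> \<le> 1 \<and>
     ((\<lambda>s. fst (\<gamma> s)) has_real_derivative u 1 t) (at t) \<and>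
     ((\<lambda>s. fst (snd (\<gamma> s))) has_real_derivative u 2 t) (at t) \<and>
     ((\<lambda>s. snd (snd (\<gamma> s))) has_real_derivative (u 2 t * fst (\<gamma> t) / 2 - u 1 t * fst (snd (\<gamma> t)) / 2)) (at t))"
      and t: "t \<in> {0<..<T}"
    then have t': "t \<in> {0..T}" by auto
    have kt: "snd (snd (lam t)) = k" by (rule pk[OF t'])
    have d1: "((\<lambda>s. fst (lam s)) has_real_derivative - (u 2 t * k / 2)) (at t)"
      and d2: "((\<lambda>s. fst (snd (lam s))) has_real_derivative u 1 t * k / 2) (at t)"
      and d3: "((\<lambda>s. fst (\<gamma> s)) has_real_derivative u 1 t) (at t)"
      and d4: "((\<lambda>s. fst (snd (\<gamma> s))) has_real_derivative u 2 t) (at t)"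
      using H t' kt by auto
    have "(q1 has_real_derivative (- (u 2 t * k / 2) + k / 2 * u 2 t)) (at t)"
      unfolding q1_def by (intro DERIV_add d1 DERIV_cmult d4)
    moreover have "(q2 has_real_derivative (u 1 t * k / 2 + (- k / 2) * u 1 t)) (at t)"
      unfolding q2_def by (intro DERIV_add d2 DERIV_cmult d3)
    ultimately show "(q1 has_real_derivative 0) (at t) \<and> (q2 has_real_derivative 0) (at t)"
      by (simp add: algebra_simps)
  qed
  have c1: "q1 t = q1 0" if "t \<in> {0..T}" for t
    by (rule ac_const[OF acq1 _ that], rule eventually_mono[OF DD]) auto
  have c2: "q2 t = q2 0" if "t \<in> {0..T}" for t
    by (rule ac_const[OF acq2 _ that], rule eventually_mono[OF DD]) auto
  show ?thesis
  proof (rule that[of k "q1 0" "q2 0"], intro ballI conjI)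
    fix t assume t: "t \<in> {0..T}"
    show "snd (snd (lam t)) = k" by (rule pk[OF t])
    show "fst (lam t) = q1 0 - k / 2 * fst (snd (\<gamma> t))" using c1[OF t] by (simp add: q1_def)
    show "fst (snd (lam t)) = q2 0 + k / 2 * fst (\<gamma> t)" using c2[OF t] by (simp add: q2_def)
  qed
qed



lemma sum2: "(\<Sum>i\<in>{1::nat,2}. g i) = g 1 + g 2" by simp

lemma sgn_lemma:
  assumes "(C::real) \<noteq> 0" "v * C = \<bar>C\<bar>"
  shows "v = sgn C"
proof (cases "C > 0")
  case True
  then have "v * C = 1 * C" using assms by simp
  then show ?thesis using True by simp
next
  case False
  then have "C < 0" using assms by simp
  then have "(v + 1) * C = 0" using assms by (simp add: distrib_right)
  then show ?thesis using \<open>C < 0\<close> by simp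
qed

lemma partA:
  assumes E: "extremal_pair T lam \<gamma> u" and nc: "\<exists>s\<in>{0..T}. \<exists>t\<in>{0..T}. \<gamma> s \<noteq> \<gamma> t"
    and j: "j \<in> {1,2}" and ab: "0 \<le> a" "a < b" "b \<le> T" and sing: "\<forall>t\<in>{a<..<b}. phi lam \<gamma> j t = 0"
  shows "(\<forall>t\<in>{0..T}. phi lam \<gamma> j t = 0) \<and> (\<exists>c\<in>{1, -1}. AE t in lebesgue. t \<in> {0..T} \<longrightarrow> u (3 - j) t = c)"
proof -
  have adm: "admissible T \<gamma> u" and acl: "abs_cont_on {0..T} lam" using E by (auto simp: extremal_pair_def)
  have acg: "abs_cont_on {0..T} \<gamma>" using adm by (simp add: admissible_def)
  note acg3 = ac_comps[OF acg]
  obtain k C1 C2 where S: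
   "\<forall>t\<in>{0..T}. snd (snd (lam t)) = k \<and> fst (lam t) = C1 - k / 2 * fst (snd (\<gamma> t)) \<and> fst (snd (lam t)) = C2 + k / 2 * fst (\<gamma> t)"
    using extremal_struct[OF E] by blast
  have ph1: "phi lam \<gamma> 1 t = C1 - k * fst (snd (\<gamma> t))" if "t \<in> {0..T}" for t
  proof -
    have e: "snd (snd (lam t)) = k" "fst (lam t) = C1 - k / 2 * fst (snd (\<gamma> t))" using S that by auto
    show ?thesis unfolding phi1 e by (simp add: algebra_simps)
  qed
  have ph2: "phi lam \<gamma> 2 t = C2 + k * fst (\<gamma> t)" if "t \<in> {0..T}" for t
  proof -
    have e: "snd (snd (lam t)) = k" "fst (snd (lam t)) = C2 + k / 2 * fst (\<gamma> t)" using S that by auto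
    show ?thesis unfolding phi2 e by (simp add: algebra_simps)
  qed
  obtain l0 where l0: "l0 \<ge> 0" and H: "AE t in lebesgue. t \<in> {0..T} \<longrightarrow>
        u 1 t * phi lam \<gamma> 1 t + u 2 t * phi lam \<gamma> 2 t = l0 \<and> \<bar>phi lam \<gamma> 1 t\<bar> + \<bar>phi lam \<gamma> 2 t\<bar> = l0"
    using E unfolding extremal_pair_def sum2 by blast
  have T0: "0 < T" using ab by simp
  note Dg = admissible_derivs[OF adm]
  have degen: False if k0: "k \<noteq> 0" and l00: "l0 = 0"
  proof -
    have AEy: "AE t in lebesgue. t \<in> {0..T} \<longrightarrow> fst (snd (\<gamma> t)) = C1 / k"
    proof (rule eventually_mono[OF H], intro impI)
      fix t assume h: "t \<in> {0..T} \<longrightarrow> u 1 t * phi lam \<gamma> 1 t + u 2 t * phi lam \<gamma> 2 t = l0 \<and> \<bar>phi lam \<gamma> 1 t\<bar> + \<bar>phi lam \<gamma> 2 t\<bar> = l0"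
        and t: "t \<in> {0..T}"
      then have "phi lam \<gamma> 1 t = 0" using l00 by auto
      then have "C1 - k * fst (snd (\<gamma> t)) = 0" using ph1[OF t] by simp
      then show "fst (snd (\<gamma> t)) = C1 / k" using k0 by (simp add: field_simps)
    qed
    have AEx: "AE t in lebesgue. t \<in> {0..T} \<longrightarrow> fst (\<gamma> t) = - C2 / k"
    proof (rule eventually_mono[OF H], intro impI)
      fix t assume h: "t \<in> {0..T} \<longrightarrow> u 1 t * phi lam \<gamma> 1 t + u 2 t * phi lam \<gamma> 2 t = l0 \<and> \<bar>phi lam \<gamma> 1 t\<bar> + \<bar>phi lam \<gamma> 2 t\<bar> = l0"
        and t: "t \<in> {0..T}"
      then have "phi lam \<gamma> 2 t = 0" using l00 by auto
      then have "C2 + k * fst (\<gamma> t) = 0" using ph2[OF t] by simp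
      then show "fst (\<gamma> t) = - C2 / k" using k0 by (simp add: field_simps)
    qed
    have yc: "\<forall>t\<in>{0..T}. fst (snd (\<gamma> t)) = C1 / k"
      using cont_ae_const[OF T0 abs_cont_continuous[OF acg3(2)] AEy] by blast
    have xc: "\<forall>t\<in>{0..T}. fst (\<gamma> t) = - C2 / k"
      using cont_ae_const[OF T0 abs_cont_continuous[OF acg3(1)] AEx] by blast
    have zder: "AE t in lebesgue. t \<in> {0<..<T} \<longrightarrow> ((\<lambda>s. snd (snd (\<gamma> s))) has_real_derivative 0) (at t)"
    proof (rule eventually_mono[OF Dg], intro impI)
      fix t assume h: "t \<in> {0..T} \<longrightarrow> \<bar>u 1 t\<bar> \<le> 1 \<and> \<bar>u 2 t\<bar> \<le> 1 \<and>
     ((\<lambda>s. fst (\<gamma> s)) has_real_derivative u 1 t) (at t) \<and>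
     ((\<lambda>s. fst (snd (\<gamma> s))) has_real_derivative u 2 t) (at t) \<and>
     ((\<lambda>s. snd (snd (\<gamma> s))) has_real_derivative (u 2 t * fst (\<gamma> t) / 2 - u 1 t * fst (snd (\<gamma> t)) / 2)) (at t)"
        and t: "t \<in> {0<..<T}"
      then have t': "t \<in> {0..T}" by auto
      have xc': "\<forall>s\<in>{0<..<T}. fst (\<gamma> s) = - C2 / k" and yc': "\<forall>s\<in>{0<..<T}. fst (snd (\<gamma> s)) = C1 / k"
        using xc yc by auto
      have "u 1 t = 0" using deriv_zero_loc[OF xc' t] h t' by blast
      moreover have "u 2 t = 0" using deriv_zero_loc[OF yc' t] h t' by blast
      ultimately show "((\<lambda>s. snd (snd (\<gamma> s))) has_real_derivative 0) (at t)" using h t' by simp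
    qed
    have zc: "snd (snd (\<gamma> t)) = snd (snd (\<gamma> 0))" if "t \<in> {0..T}" for t
      by (rule ac_const[OF acg3(3) zder that])
    have "\<gamma> s = \<gamma> t" if "s \<in> {0..T}" "t \<in> {0..T}" for s t
      using xc yc zc[OF that(1)] zc[OF that(2)] that by (simp add: prod_eq_iff)
    then show False using nc by blast
  qed
  have ex_t: "\<exists>t\<in>{a<..<b}. (t \<in> {0..T} \<longrightarrow> \<bar>u 1 t\<bar> \<le> 1 \<and> \<bar>u 2 t\<bar> \<le> 1 \<and>
     ((\<lambda>s. fst (\<gamma> s)) has_real_derivative u 1 t) (at t) \<and>
     ((\<lambda>s. fst (snd (\<gamma> s))) has_real_derivative u 2 t) (at t) \<and>
     ((\<lambda>s. snd (snd (\<gamma> s))) has_real_derivative (u 2 t * fst (\<gamma> t) / 2 - u 1 t * fst (snd (\<gamma> t)) / 2)) (at t)) \<and>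
     (t \<in> {0..T} \<longrightarrow> u 1 t * phi lam \<gamma> 1 t + u 2 t * phi lam \<gamma> 2 t = l0 \<and> \<bar>phi lam \<gamma> 1 t\<bar> + \<bar>phi lam \<gamma> 2 t\<bar> = l0)"
    by (rule AE_exists_in[OF ab(2) eventually_conj[OF Dg H]])
  have lam0: "lam 0 \<noteq> 0" using E ab by (auto simp: extremal_pair_def)
  show ?thesis
  proof (cases "j = 1")
    case j1: True
    have sing1: "C1 - k * fst (snd (\<gamma> t)) = 0" if "t \<in> {a<..<b}" for t
      using sing j1 ph1[of t] that ab by auto
    show ?thesis
    proof (cases "k = 0")
      case k0: True
      then have C10: "C1 = 0" using sing1[of "(a+b)/2"] ab by auto
      have "lam 0 = (0, C2, 0)" using S ab C10 k0 by (simp add: prod_eq_iff)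
      then have C2ne: "C2 \<noteq> 0" using lam0 by (auto simp: zero_prod_def)
      have phi1z: "\<forall>t\<in>{0..T}. phi lam \<gamma> 1 t = 0" using ph1 C10 k0 by simp
      have phi2c: "\<forall>t\<in>{0..T}. phi lam \<gamma> 2 t = C2" using ph2 k0 by simp
      have "AE t in lebesgue. t \<in> {0..T} \<longrightarrow> u 2 t = sgn C2"
      proof (rule eventually_mono[OF H], intro impI)
        fix t assume h: "t \<in> {0..T} \<longrightarrow> u 1 t * phi lam \<gamma> 1 t + u 2 t * phi lam \<gamma> 2 t = l0 \<and> \<bar>phi lam \<gamma> 1 t\<bar> + \<bar>phi lam \<gamma> 2 t\<bar> = l0"
          and t: "t \<in> {0..T}"
        then have "u 2 t * C2 = \<bar>C2\<bar>" using phi1z phi2c by auto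
        then show "u 2 t = sgn C2" by (rule sgn_lemma[OF C2ne])
      qed
      moreover have "sgn C2 \<in> {1, -1}" using C2ne by (auto simp: sgn_if)
      ultimately have "\<exists>c\<in>{1, -1}. AE t in lebesgue. t \<in> {0..T} \<longrightarrow> u 2 t = c" by blast
      then show ?thesis using phi1z j1 by auto
    next
      case k0: False
      have yc: "\<forall>t\<in>{a<..<b}. fst (snd (\<gamma> t)) = C1 / k" using sing1 k0 by (auto simp: field_simps)
      obtain t where t: "t \<in> {a<..<b}" and ht: "(t \<in> {0..T} \<longrightarrow> \<bar>u 1 t\<bar> \<le> 1 \<and> \<bar>u 2 t\<bar> \<le> 1 \<and>
     ((\<lambda>s. fst (\<gamma> s)) has_real_derivative u 1 t) (at t) \<and>
     ((\<lambda>s. fst (snd (\<gamma> s))) has_real_derivative u 2 t) (at t) \<and>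
     ((\<lambda>s. snd (snd (\<gamma> s))) has_real_derivative (u 2 t * fst (\<gamma> t) / 2 - u 1 t * fst (snd (\<gamma> t)) / 2)) (at t)) \<and>
     (t \<in> {0..T} \<longrightarrow> u 1 t * phi lam \<gamma> 1 t + u 2 t * phi lam \<gamma> 2 t = l0 \<and> \<bar>phi lam \<gamma> 1 t\<bar> + \<bar>phi lam \<gamma> 2 t\<bar> = l0)"
        using ex_t by blast
      have t': "t \<in> {0..T}" using t ab by auto
      have "u 2 t = 0" using deriv_zero_loc[OF yc t] ht t' by blast
      moreover have "phi lam \<gamma> 1 t = 0" using sing j1 t by auto
      ultimately have "l0 = 0" using ht t' by simp
      then show ?thesis using degen k0 by blast
    qed
  next
    case j2: False
    then have j2: "j = 2" using j by auto
    have sing2: "C2 + k * fst (\<gamma> t) = 0" if "t \<in> {a<..<b}" for t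
      using sing j2 ph2[of t] that ab by auto
    show ?thesis
    proof (cases "k = 0")
      case k0: True
      then have C20: "C2 = 0" using sing2[of "(a+b)/2"] ab by auto
      have "lam 0 = (C1, 0, 0)" using S ab C20 k0 by (simp add: prod_eq_iff)
      then have C1ne: "C1 \<noteq> 0" using lam0 by (auto simp: zero_prod_def)
      have phi2z: "\<forall>t\<in>{0..T}. phi lam \<gamma> 2 t = 0" using ph2 C20 k0 by simp
      have phi1c: "\<forall>t\<in>{0..T}. phi lam \<gamma> 1 t = C1" using ph1 k0 by simp
      have "AE t in lebesgue. t \<in> {0..T} \<longrightarrow> u 1 t = sgn C1"
      proof (rule eventually_mono[OF H], intro impI)
        fix t assume h: "t \<in> {0..T} \<longrightarrow> u 1 t * phi lam \<gamma> 1 t + u 2 t * phi lam \<gamma> 2 t = l0 \<and> \<bar>phi lam \<gamma> 1 t\<bar> + \<bar>phi lam \<gamma> 2 t\<bar> = l0"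
          and t: "t \<in> {0..T}"
        then have "u 1 t * C1 = \<bar>C1\<bar>" using phi2z phi1c by auto
        then show "u 1 t = sgn C1" by (rule sgn_lemma[OF C1ne])
      qed
      moreover have "sgn C1 \<in> {1, -1}" using C1ne by (auto simp: sgn_if)
      ultimately have "\<exists>c\<in>{1, -1}. AE t in lebesgue. t \<in> {0..T} \<longrightarrow> u 1 t = c" by blast
      then show ?thesis using phi2z j2 by auto
    next
      case k0: False
      have xc: "\<forall>t\<in>{a<..<b}. fst (\<gamma> t) = - C2 / k"
      proof
        fix t assume "t \<in> {a<..<b}"
        then have "C2 + k * fst (\<gamma> t) = 0" by (rule sing2)
        then show "fst (\<gamma> t) = - C2 / k" using k0 by (simp add: field_simps)
      qed
      obtain t where t: "t \<in> {a<..<b}" and ht: "(t \<in> {0..T} \<longrightarrow> \<bar>u 1 t\<bar> \<le> 1 \<and> \<bar>u 2 t\<bar> \<le> 1 \<and>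
     ((\<lambda>s. fst (\<gamma> s)) has_real_derivative u 1 t) (at t) \<and>
     ((\<lambda>s. fst (snd (\<gamma> s))) has_real_derivative u 2 t) (at t) \<and>
     ((\<lambda>s. snd (snd (\<gamma> s))) has_real_derivative (u 2 t * fst (\<gamma> t) / 2 - u 1 t * fst (snd (\<gamma> t)) / 2)) (at t)) \<and>
     (t \<in> {0..T} \<longrightarrow> u 1 t * phi lam \<gamma> 1 t + u 2 t * phi lam \<gamma> 2 t = l0 \<and> \<bar>phi lam \<gamma> 1 t\<bar> + \<bar>phi lam \<gamma> 2 t\<bar> = l0)"
        using ex_t by blast
      have t': "t \<in> {0..T}" using t ab by auto
      have "u 1 t = 0" using deriv_zero_loc[OF xc t] ht t' by blast
      moreover have "phi lam \<gamma> 2 t = 0" using sing j2 t by auto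
      ultimately have "l0 = 0" using ht t' by simp
      then show ?thesis using degen k0 by blast
    qed
  qed
qed



lemma const_extremal:
  assumes adm: "admissible T \<gamma> u" and ne: "(p1, p2) \<noteq> (0::real, 0::real)"
    and ae: "AE t in lebesgue. t \<in> {0..T} \<longrightarrow> u 1 t * p1 + u 2 t * p2 = 1 \<and> \<bar>p1\<bar> + \<bar>p2\<bar> = 1"
  shows "extremal_pair T (\<lambda>t. (p1, p2, 0)) \<gamma> u"
  unfolding extremal_pair_def
proof (intro conjI)
  show "admissible T \<gamma> u" by fact
  show "abs_cont_on {0..T} (\<lambda>t. (p1, p2, 0::real))" by (rule abs_cont_const)
  show "\<forall>t\<in>{0..T}. (p1, p2, 0::real) \<noteq> 0" using ne by (auto simp: zero_prod_def)
  show "AE t in lebesgue. t \<in> {0..T} \<longrightarrow> (\<exists>\<mu>. ((\<lambda>t. (p1, p2, 0::real)) has_vector_derivative \<mu>) (at t) \<and>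
             (\<forall>v. inner \<mu> v = - (\<Sum>i\<in>{1,2}. u i t * inner (p1, p2, 0::real) (frechet_derivative (X i) (at (\<gamma> t)) v))))"
  proof (rule always_eventually, intro allI impI)
    fix t
    have "((\<lambda>t. (p1, p2, 0::real)) has_vector_derivative 0) (at t)" by simp
    moreover have "\<forall>v. inner (0::pt) v = - (\<Sum>i\<in>{1,2}. u i t * inner (p1, p2, 0::real) (frechet_derivative (X i) (at (\<gamma> t)) v))"
      unfolding sum2 DX1 DX2 by (simp add: inner_prod_def)
    ultimately show "\<exists>\<mu>. ((\<lambda>t. (p1, p2, 0::real)) has_vector_derivative \<mu>) (at t) \<and>
             (\<forall>v. inner \<mu> v = - (\<Sum>i\<in>{1,2}. u i t * inner (p1, p2, 0::real) (frechet_derivative (X i) (at (\<gamma> t)) v)))"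
      by blast
  qed
  show "\<exists>lam0\<ge>0. AE t in lebesgue. t \<in> {0..T} \<longrightarrow>
        (\<Sum>i\<in>{1,2}. u i t * phi (\<lambda>t. (p1, p2, 0)) \<gamma> i t) = lam0 \<and> (\<Sum>i\<in>{1,2}. \<bar>phi (\<lambda>t. (p1, p2, 0)) \<gamma> i t\<bar>) = lam0"
  proof (intro exI conjI)
    show "(0::real) \<le> 1" by simp
    show "AE t in lebesgue. t \<in> {0..T} \<longrightarrow>
        (\<Sum>i\<in>{1,2}. u i t * phi (\<lambda>t. (p1, p2, 0)) \<gamma> i t) = 1 \<and> (\<Sum>i\<in>{1,2}. \<bar>phi (\<lambda>t. (p1, p2, 0)) \<gamma> i t\<bar>) = 1"
      unfolding sum2 phi1 phi2 using ae by simp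
  qed
qed

lemma partB:
  assumes adm: "admissible T \<gamma> u" and i: "i \<in> {1,2}" and c: "c \<in> {1, -1}"
    and ae: "AE t in lebesgue. t \<in> {0..T} \<longrightarrow> u i t = c"
  shows "\<exists>lam. extremal_pair T lam \<gamma> u \<and> (\<forall>t\<in>{0..T}. phi lam \<gamma> (3 - i) t = 0)"
proof (cases "i = 1")
  case True
  have ex: "extremal_pair T (\<lambda>t. (c, 0, 0)) \<gamma> u"
  proof (rule const_extremal[OF adm])
    show "(c, 0) \<noteq> (0::real, 0::real)" using c by auto
    show "AE t in lebesgue. t \<in> {0..T} \<longrightarrow> u 1 t * c + u 2 t * 0 = 1 \<and> \<bar>c\<bar> + \<bar>0\<bar> = 1"
      by (rule eventually_mono[OF ae]) (use c True in auto)
  qed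
  moreover have "\<forall>t\<in>{0..T}. phi (\<lambda>t. (c, 0, 0)) \<gamma> 2 t = 0" unfolding phi2 by simp
  ultimately show ?thesis using True by (metis numeral_3_eq_3 diff_Suc_1 One_nat_def numeral_2_eq_2)
next
  case False
  then have i2: "i = 2" using i by auto
  have ex: "extremal_pair T (\<lambda>t. (0, c, 0)) \<gamma> u"
  proof (rule const_extremal[OF adm])
    show "(0, c) \<noteq> (0::real, 0::real)" using c by auto
    show "AE t in lebesgue. t \<in> {0..T} \<longrightarrow> u 1 t * 0 + u 2 t * c = 1 \<and> \<bar>0\<bar> + \<bar>c\<bar> = 1"
      by (rule eventually_mono[OF ae]) (use c i2 in auto)
  qed
  moreover have "\<forall>t\<in>{0..T}. phi (\<lambda>t. (0, c, 0)) \<gamma> 1 t = 0" unfolding phi1 by simp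
  moreover have "(3::nat) - i = 1" using i2 by simp
  ultimately show ?thesis by metis
qed

lemma comp_bounds:
  assumes adm: "admissible T \<gamma> u"
  shows "\<bar>fst (\<gamma> T) - fst (\<gamma> 0)\<bar> \<le> T" "\<bar>fst (snd (\<gamma> T)) - fst (snd (\<gamma> 0))\<bar> \<le> T"
proof -
  have T0: "0 \<le> T" and acg: "abs_cont_on {0..T} \<gamma>" using adm by (auto simp: admissible_def)
  note acg3 = ac_comps[OF acg] and Dg = admissible_derivs[OF adm]
  have "\<bar>fst (\<gamma> T) - fst (\<gamma> 0)\<bar> \<le> 1 * (T - 0)"
    by (rule ac_bound[OF T0 acg3(1)], simp, rule eventually_mono[OF Dg]) auto
  then show "\<bar>fst (\<gamma> T) - fst (\<gamma> 0)\<bar> \<le> T" by simp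
  have "\<bar>fst (snd (\<gamma> T)) - fst (snd (\<gamma> 0))\<bar> \<le> 1 * (T - 0)"
    by (rule ac_bound[OF T0 acg3(2)], simp, rule eventually_mono[OF Dg]) auto
  then show "\<bar>fst (snd (\<gamma> T)) - fst (snd (\<gamma> 0))\<bar> \<le> T" by simp
qed

lemma comp_eq:
  assumes adm: "admissible T \<gamma> u"
  shows "(AE t in lebesgue. t \<in> {0..T} \<longrightarrow> u 1 t = c) \<Longrightarrow> fst (\<gamma> T) - fst (\<gamma> 0) = c * T"
    "(AE t in lebesgue. t \<in> {0..T} \<longrightarrow> u 2 t = c) \<Longrightarrow> fst (snd (\<gamma> T)) - fst (snd (\<gamma> 0)) = c * T"
proof -
  have T0: "0 \<le> T" and acg: "abs_cont_on {0..T} \<gamma>" using adm by (auto simp: admissible_def)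
  note acg3 = ac_comps[OF acg] and Dg = admissible_derivs[OF adm]
  have acid: "abs_cont_on {0..T} (\<lambda>t. (- c) * t)" by (rule ac_scale[OF abs_cont_id])
  have TT: "T \<in> {0..T}" using T0 by simp
  show "fst (\<gamma> T) - fst (\<gamma> 0) = c * T" if ae: "AE t in lebesgue. t \<in> {0..T} \<longrightarrow> u 1 t = c"
  proof -
    have "fst (\<gamma> T) + (- c) * T = fst (\<gamma> 0) + (- c) * 0"
    proof (rule ac_const[OF abs_cont_add[OF acg3(1) acid] _ TT])
      show "AE t in lebesgue. t \<in> {0<..<T} \<longrightarrow> ((\<lambda>t. fst (\<gamma> t) + - c * t) has_real_derivative 0) (at t)"
      proof (rule eventually_mono[OF eventually_conj[OF Dg ae]], intro impI)
        fix t assume h: "(t \<in> {0..T} \<longrightarrow> \<bar>u 1 t\<bar> \<le> 1 \<and> \<bar>u 2 t\<bar> \<le> 1 \<and>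
     ((\<lambda>s. fst (\<gamma> s)) has_real_derivative u 1 t) (at t) \<and>
     ((\<lambda>s. fst (snd (\<gamma> s))) has_real_derivative u 2 t) (at t) \<and>
     ((\<lambda>s. snd (snd (\<gamma> s))) has_real_derivative (u 2 t * fst (\<gamma> t) / 2 - u 1 t * fst (snd (\<gamma> t)) / 2)) (at t)) \<and>
     (t \<in> {0..T} \<longrightarrow> u 1 t = c)" and t: "t \<in> {0<..<T}"
        then have d: "((\<lambda>s. fst (\<gamma> s)) has_real_derivative c) (at t)" by auto
        have "((\<lambda>t. fst (\<gamma> t) + - c * t) has_real_derivative (c + - c * 1)) (at t)"
          by (intro DERIV_add d DERIV_cmult DERIV_ident)
        then show "((\<lambda>t. fst (\<gamma> t) + - c * t) has_real_derivative 0) (at t)" by simp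
      qed
    qed
    then show ?thesis by simp
  qed
  show "fst (snd (\<gamma> T)) - fst (snd (\<gamma> 0)) = c * T" if ae: "AE t in lebesgue. t \<in> {0..T} \<longrightarrow> u 2 t = c"
  proof -
    have "fst (snd (\<gamma> T)) + (- c) * T = fst (snd (\<gamma> 0)) + (- c) * 0"
    proof (rule ac_const[OF abs_cont_add[OF acg3(2) acid] _ TT])
      show "AE t in lebesgue. t \<in> {0<..<T} \<longrightarrow> ((\<lambda>t. fst (snd (\<gamma> t)) + - c * t) has_real_derivative 0) (at t)"
      proof (rule eventually_mono[OF eventually_conj[OF Dg ae]], intro impI)
        fix t assume h: "(t \<in> {0..T} \<longrightarrow> \<bar>u 1 t\<bar> \<le> 1 \<and> \<bar>u 2 t\<bar> \<le> 1 \<and>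
     ((\<lambda>s. fst (\<gamma> s)) has_real_derivative u 1 t) (at t) \<and>
     ((\<lambda>s. fst (snd (\<gamma> s))) has_real_derivative u 2 t) (at t) \<and>
     ((\<lambda>s. snd (snd (\<gamma> s))) has_real_derivative (u 2 t * fst (\<gamma> t) / 2 - u 1 t * fst (snd (\<gamma> t)) / 2)) (at t)) \<and>
     (t \<in> {0..T} \<longrightarrow> u 2 t = c)" and t: "t \<in> {0<..<T}"
        then have d: "((\<lambda>s. fst (snd (\<gamma> s))) has_real_derivative c) (at t)" by auto
        have "((\<lambda>t. fst (snd (\<gamma> t)) + - c * t) has_real_derivative (c + - c * 1)) (at t)"
          by (intro DERIV_add d DERIV_cmult DERIV_ident)
        then show "((\<lambda>t. fst (snd (\<gamma> t)) + - c * t) has_real_derivative 0) (at t)" by simp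
      qed
    qed
    then show ?thesis by simp
  qed
qed

lemma partC:
  assumes adm: "admissible T \<gamma> u" and i: "i \<in> {1,2}" and c: "c \<in> {1, -1}"
    and ae: "AE t in lebesgue. t \<in> {0..T} \<longrightarrow> u i t = c"
  shows "time_minimizer T \<gamma>"
  unfolding time_minimizer_def
proof (intro allI impI)
  fix T' \<gamma>' u' assume H: "admissible T' \<gamma>' u' \<and> \<gamma>' 0 = \<gamma> 0 \<and> \<gamma>' T' = \<gamma> T"
  have T0: "0 \<le> T" using adm by (simp add: admissible_def)
  have ac: "\<bar>c\<bar> = 1" using c by auto
  note B = comp_bounds[of T' \<gamma>' u'] 
  show "T \<le> T'"
  proof (cases "i = 1")
    case True
    have "fst (\<gamma> T) - fst (\<gamma> 0) = c * T" using comp_eq(1)[OF adm] ae True by simp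
    moreover have "\<bar>fst (\<gamma>' T') - fst (\<gamma>' 0)\<bar> \<le> T'" using B H by blast
    ultimately show ?thesis using H ac T0 by (simp add: abs_mult)
  next
    case False
    then have "i = 2" using i by simp
    then have "fst (snd (\<gamma> T)) - fst (snd (\<gamma> 0)) = c * T" using comp_eq(2)[OF adm] ae by simp
    moreover have "\<bar>fst (snd (\<gamma>' T')) - fst (snd (\<gamma>' 0))\<bar> \<le> T'" using B H by blast
    ultimately show ?thesis using H ac T0 by (simp add: abs_mult)
  qed
qed


theorem mainTheorem3:
  shows
  "(\<forall>T lam \<gamma> u j a b. extremal_pair T lam \<gamma> u \<and> (\<exists>s\<in>{0..T}. \<exists>t\<in>{0..T}. \<gamma> s \<noteq> \<gamma> t) \<and>
       j \<in> {1,2} \<and> 0 \<le> a \<and> a < b \<and> b \<le> T \<and> (\<forall>t\<in>{a<..<b}. phi lam \<gamma> j t = 0)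
     \<longrightarrow> (\<forall>t\<in>{0..T}. phi lam \<gamma> j t = 0) \<and>
         (\<exists>c\<in>{1, -1}. AE t in lebesgue. t \<in> {0..T} \<longrightarrow> u (3 - j) t = c))
   \<and>
   (\<forall>T \<gamma> u i c. admissible T \<gamma> u \<and> i \<in> {1,2} \<and> c \<in> {1, -1} \<and>
       (AE t in lebesgue. t \<in> {0..T} \<longrightarrow> u i t = c)
     \<longrightarrow> (\<exists>lam. extremal_pair T lam \<gamma> u \<and> (\<forall>t\<in>{0..T}. phi lam \<gamma> (3 - i) t = 0)))
   \<and>
   (\<forall>T \<gamma> u i c. admissible T \<gamma> u \<and> i \<in> {1,2} \<and> c \<in> {1, -1} \<and>
       (AE t in lebesgue. t \<in> {0..T} \<longrightarrow> u i t = c)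
     \<longrightarrow> time_minimizer T \<gamma>)"
proof (rule conjI[OF _ conjI])
  show "\<forall>T lam \<gamma> u j a b. extremal_pair T lam \<gamma> u \<and> (\<exists>s\<in>{0..T}. \<exists>t\<in>{0..T}. \<gamma> s \<noteq> \<gamma> t) \<and>
       j \<in> {1,2} \<and> 0 \<le> a \<and> a < b \<and> b \<le> T \<and> (\<forall>t\<in>{a<..<b}. phi lam \<gamma> j t = 0)
     \<longrightarrow> (\<forall>t\<in>{0..T}. phi lam \<gamma> j t = 0) \<and>
         (\<exists>c\<in>{1, -1}. AE t in lebesgue. t \<in> {0..T} \<longrightarrow> u (3 - j) t = c)"
  proof (intro allI impI)
  fix T lam \<gamma> u j a b
  assume H: "extremal_pair T lam \<gamma> u \<and> (\<exists>s\<in>{0..T}. \<exists>t\<in>{0..T}. \<gamma> s \<noteq> \<gamma> t) \<and>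
       j \<in> {1,2} \<and> 0 \<le> a \<and> a < b \<and> b \<le> T \<and> (\<forall>t\<in>{a<..<b}. phi lam \<gamma> j t = 0)"
  then have "extremal_pair T lam \<gamma> u" "\<exists>s\<in>{0..T}. \<exists>t\<in>{0..T}. \<gamma> s \<noteq> \<gamma> t" "j \<in> {1,2}" "0 \<le> a" "a < b" "b \<le> T"
    "\<forall>t\<in>{a<..<b}. phi lam \<gamma> j t = 0" by blast+
  then show "(\<forall>t\<in>{0..T}. phi lam \<gamma> j t = 0) \<and>
         (\<exists>c\<in>{1, -1}. AE t in lebesgue. t \<in> {0..T} \<longrightarrow> u (3 - j) t = c)"
    by (rule partA)
  qed
next
  show "\<forall>T \<gamma> u i c. admissible T \<gamma> u \<and> i \<in> {1,2} \<and> c \<in> {1, -1} \<and>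
       (AE t in lebesgue. t \<in> {0..T} \<longrightarrow> u i t = c)
     \<longrightarrow> (\<exists>lam. extremal_pair T lam \<gamma> u \<and> (\<forall>t\<in>{0..T}. phi lam \<gamma> (3 - i) t = 0))"
  proof (intro allI impI)
  fix T \<gamma> u i c
  assume "admissible T \<gamma> u \<and> i \<in> {1,2} \<and> c \<in> {1, -1} \<and>
       (AE t in lebesgue. t \<in> {0..T} \<longrightarrow> u i t = c)"
  then have "admissible T \<gamma> u" "i \<in> {1,2}" "c \<in> {1, -1}" "AE t in lebesgue. t \<in> {0..T} \<longrightarrow> u i t = c"
    by blast+
  then show "\<exists>lam. extremal_pair T lam \<gamma> u \<and> (\<forall>t\<in>{0..T}. phi lam \<gamma> (3 - i) t = 0)"
    by (rule partB)
  qed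
next
  show "\<forall>T \<gamma> u i c. admissible T \<gamma> u \<and> i \<in> {1,2} \<and> c \<in> {1, -1} \<and>
       (AE t in lebesgue. t \<in> {0..T} \<longrightarrow> u i t = c)
     \<longrightarrow> time_minimizer T \<gamma>"
  proof (intro allI impI)
  fix T \<gamma> u i c
  assume "admissible T \<gamma> u \<and> i \<in> {1,2} \<and> c \<in> {1, -1} \<and>
       (AE t in lebesgue. t \<in> {0..T} \<longrightarrow> u i t = c)"
  then have "admissible T \<gamma> u" "i \<in> {1,2}" "c \<in> {1, -1}" "AE t in lebesgue. t \<in> {0..T} \<longrightarrow> u i t = c"
    by blast+
  then show "time_minimizer T \<gamma>"
    by (rule partC)
  qed
qed

end
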